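(* For integers $0 \le j \le i$ let $P(i,j) = \frac{i!}{(i-j)!}$, and for an integer $i \geq 0$ let $F(i) = \sum_{j=0}^{i} P(i,j)$. For integers $N \geq 1$ and $1 \leq n \leq N$ define \[ P_{RPS}(n \mid N) = \frac{P(N,n)\,\bigl(F(n)-1\bigr)}{\sum_{i=1}^{N} P(N,i)\,\bigl(F(i)-1\bigr)} . \] Then \[ \lim_{N \to \infty} P_{RPS}(N \mid N) = 1 . \]
   Context: $P_{RPS}(\cdot \mid N)$ is called the RPST distribution: a probability distribution on $\{1, \dots, N\}$, where $P(N,n)$ is the number of ordered selections (permutation sequences) of length $n$ from $N$ elements, and $F(i)$ is the number of permutation events, including the empty one, on a set of $i$ elements. *)

theory Defs
  imports Complex_Main
begin

definition perm_count :: "nat \<Rightarrow> nat \<Rightarrow> nat" where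
  "perm_count i j = fact i div fact (i - j)"

definition F_count :: "nat \<Rightarrow> nat" where
  "F_count i = (\<Sum>j = 0..i. perm_count i j)"

definition P_RPS :: "nat \<Rightarrow> nat \<Rightarrow> real" where
  "P_RPS n N = real (perm_count N n) * (real (F_count n) - 1) /
      (\<Sum>i = 1..N. real (perm_count N i) * (real (F_count i) - 1))"

end

theory Submission
  imports Defs
begin

lemma perm_rec: "k \<le> i \<Longrightarrow> perm_count (Suc i) (Suc k) = Suc i * perm_count i k"
  unfolding perm_count_def
  by (simp add: div_mult_swap fact_dvd)

lemma perm_zero: "perm_count i 0 = 1"
  unfolding perm_count_def by simp

lemma perm_full: "perm_count i i = fact i"
  unfolding perm_count_def by simp

lemma perm_le: "perm_count N i \<le> fact N"
  unfolding perm_count_def by (simp add: div_le_dividend)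

lemma F_rec: "F_count (Suc i) = Suc i * F_count i + 1"
proof -
  have "F_count (Suc i) = perm_count (Suc i) 0 + (\<Sum>j = 0..i. perm_count (Suc i) (Suc j))"
    unfolding F_count_def by (simp only: sum.atLeast0_atMost_Suc_shift o_def)
  also have "(\<Sum>j = 0..i. perm_count (Suc i) (Suc j)) = (\<Sum>j = 0..i. Suc i * perm_count i j)"
    by (rule sum.cong) (auto simp: perm_rec)
  also have "\<dots> = Suc i * F_count i" unfolding F_count_def by (simp add: sum_distrib_left)
  finally show ?thesis by (simp add: perm_zero)
qed

lemma F_zero: "F_count 0 = 1"
  unfolding F_count_def by (simp add: perm_zero)

lemma F_lower: "i \<ge> 1 \<Longrightarrow> F_count i \<ge> fact i + 1"
proof (induction i rule: nat_induct_at_least)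
  case base then show ?case by (simp add: F_rec F_zero)
next
  case (Suc n)
  have "fact (Suc n) + 1 \<le> Suc n * (fact n + 1) + 1" by (simp add: algebra_simps)
  also have "\<dots> \<le> Suc n * F_count n + 1" using Suc.IH by (intro add_right_mono mult_left_mono) auto
  finally show ?case by (simp add: F_rec)
qed

lemma F_upper: "i \<ge> 1 \<Longrightarrow> F_count i + 1 \<le> 3 * fact i"
proof (induction i rule: nat_induct_at_least)
  case base then show ?case by (simp add: F_rec F_zero)
next
  case (Suc n)
  have "F_count (Suc n) + 1 = Suc n * F_count n + 2" by (simp add: F_rec)
  also have "\<dots> + Suc n \<le> Suc n * (F_count n + 1) + 2" by (simp add: algebra_simps)
  also have "\<dots> \<le> Suc n * (3 * fact n) + 2" using Suc.IH by (intro add_right_mono mult_left_mono) auto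
  finally have "F_count (Suc n) + 1 + Suc n \<le> 3 * fact (Suc n) + 2" by (simp add: algebra_simps)
  then show ?case using Suc.hyps by simp
qed

lemma F_ge1: "F_count i \<ge> 1"
proof (cases i)
  case 0 then show ?thesis by (simp add: F_zero)
next
  case (Suc n)
  have "F_count (Suc n) \<ge> fact (Suc n) + 1" by (rule F_lower) simp
  then show ?thesis using Suc by simp
qed

lemma fact_sum: "m \<ge> 1 \<Longrightarrow> (\<Sum>i = 1..m. fact i :: nat) \<le> 2 * fact m"
proof (induction m rule: nat_induct_at_least)
  case base then show ?case by simp
next
  case (Suc n)
  have "2 * fact n \<le> (fact (Suc n) :: nat)" using Suc.hyps by (simp add: mult_right_mono)
  moreover have "(\<Sum>i = 1..Suc n. fact i :: nat) = (\<Sum>i = 1..n. fact i) + fact (Suc n)"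
    using Suc.hyps by (simp add: sum.cl_ivl_Suc)
  ultimately show ?case using Suc.IH by linarith
qed

lemma key:
  assumes N: "N \<ge> 2"
  shows "N * (\<Sum>i = 1..N-1. perm_count N i * (F_count i - 1))
         \<le> 6 * (perm_count N N * (F_count N - 1))"
proof -
  have "(\<Sum>i = 1..N-1. perm_count N i * (F_count i - 1)) \<le> (\<Sum>i = 1..N-1. fact N * (3 * fact i))"
  proof (rule sum_mono)
    fix i assume "i \<in> {1..N-1}"
    then have "F_count i - 1 \<le> 3 * fact i" using F_upper[of i] by auto
    then show "perm_count N i * (F_count i - 1) \<le> fact N * (3 * fact i)"
      using perm_le by (intro mult_mono) auto
  qed
  also have "\<dots> = 3 * fact N * (\<Sum>i = 1..N-1. fact i)" unfolding sum_distrib_left by (rule sum.cong) auto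
  also have "\<dots> \<le> 3 * fact N * (2 * fact (N-1))"
    using fact_sum[of "N-1"] N by (intro mult_left_mono) auto
  finally have S: "(\<Sum>i = 1..N-1. perm_count N i * (F_count i - 1)) \<le> 3 * fact N * (2 * fact (N-1))" .
  have A: "N * (\<Sum>i = 1..N-1. perm_count N i * (F_count i - 1)) \<le> N * (3 * fact N * (2 * fact (N-1)))"
    using S by (rule mult_left_mono) simp
  obtain m where m: "N = Suc m" using N by (cases N) auto
  have E: "N * (3 * fact N * (2 * fact (N-1))) = 6 * (fact N * fact N :: nat)"
    unfolding m by (simp only: fact_Suc diff_Suc_1) (simp add: algebra_simps)
  have "F_count N - 1 \<ge> fact N" using F_lower[of N] N by linarith
  then have "fact N * fact N \<le> perm_count N N * (F_count N - 1)"
    unfolding perm_full by (rule mult_left_mono) simp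
  then show ?thesis using A E by linarith
qed

theorem mainTheorem2:
  shows "(\<lambda>N. P_RPS N N) \<longlonglongrightarrow> 1"
proof -
  define a where "a N = perm_count N N * (F_count N - 1)" for N
  define R where "R N = (\<Sum>i = 1..N-1. perm_count N i * (F_count i - 1))" for N
  have bound: "\<bar>P_RPS N N - 1\<bar> \<le> 6 / real N" if N: "N \<ge> 2" for N
  proof -
    have g1: "F_count N \<ge> fact N + 1" using F_lower[of N] N by simp
    have g2: "fact N \<ge> (1::nat)" by (rule fact_ge_1)
    have f1: "F_count N - 1 > 0" using g1 g2 by linarith
    have apos: "a N > 0" unfolding a_def perm_full using f1 by simp
    have k: "real N * real (R N) \<le> 6 * real (a N)"
      using key[OF N] unfolding a_def R_def by (metis of_nat_le_iff of_nat_mult of_nat_numeral)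
    have conv: "real (perm_count N i) * (real (F_count i) - 1) = real (perm_count N i * (F_count i - 1))" for i
      using F_ge1[of i] by (simp add: of_nat_diff)
    have "{1..N} = insert N {1..N-1}" using N by auto
    then have "(\<Sum>i = 1..N. real (perm_count N i) * (real (F_count i) - 1)) = real (a N) + real (R N)"
      unfolding conv a_def R_def using N by (simp add: of_nat_sum)
    then have P: "P_RPS N N = real (a N) / (real (a N) + real (R N))"
      unfolding P_RPS_def by (simp add: conv a_def)
    have "\<bar>P_RPS N N - 1\<bar> = real (R N) / (real (a N) + real (R N))"
      using apos by (simp add: P field_simps)
    also have "\<dots> \<le> real (R N) / real (a N)" using apos
      by (intro divide_left_mono) auto
    also have "\<dots> \<le> 6 / real N" using apos N k by (simp add: field_simps)
    finally show ?thesis .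
  qed
  have lim6: "(\<lambda>N. 6 / real N) \<longlonglongrightarrow> 0"
    by (rule tendsto_divide_0[OF tendsto_const filterlim_at_top_imp_at_infinity[OF filterlim_real_sequentially]])
  have ev: "\<forall>\<^sub>F N in sequentially. norm (P_RPS N N - 1) \<le> norm (6 / real N) * 1"
    using eventually_ge_at_top[of 2]
  proof (rule eventually_mono)
    fix N :: nat assume "N \<ge> 2"
    then show "norm (P_RPS N N - 1) \<le> norm (6 / real N) * 1" using bound[of N] by simp
  qed
  have "(\<lambda>N. P_RPS N N - 1) \<longlonglongrightarrow> 0" by (rule tendsto_0_le[OF lim6 ev])
  then show ?thesis by (simp add: LIM_zero_iff)
qed

end
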